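(* Let $\alpha:I\to\mathbb{E}^3$ be a smooth space curve parametrized by arclength $s$ with curvature $\kappa\equiv1$. Then $\alpha$ is a Salkowski curve if and only if $\det(\alpha^{(3)}(s),\alpha^{(4)}(s),\alpha^{(5)}(s))=0$ for all $s\in I$.
   Context: $\alpha^{(k)}$ denotes the $k$-th derivative with respect to arclength, and $\det(u,v,w)$ is the determinant of the matrix with columns $u,v,w$. $\{T,N,B\}$ is the Frenet frame of $\alpha$. A Salkowski curve is a curve of constant curvature whose principal normal vector $N$ makes a constant angle with a fixed direction, i.e. $\langle N(s),d\rangle$ is constant for some fixed unit vector $d$ (equivalently, for $\kappa\equiv1$, $\alpha$ is a slant helix). *)

theory Defs
  imports "HOL-Analysis.Analysis"
begin

fun hderiv :: "(real \<Rightarrow> real^3) \<Rightarrow> nat \<Rightarrow> real \<Rightarrow> real^3" where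
  "hderiv \<alpha> 0 = \<alpha>"
| "hderiv \<alpha> (Suc k) = (\<lambda>t. vector_derivative (hderiv \<alpha> k) (at t))"

definition smooth_curve :: "(real \<Rightarrow> real^3) \<Rightarrow> real set \<Rightarrow> bool" where
  "smooth_curve \<alpha> I \<longleftrightarrow>
     (\<forall>k. \<forall>t\<in>I. (hderiv \<alpha> k has_vector_derivative hderiv \<alpha> (Suc k) t) (at t))"

definition arclength_param :: "(real \<Rightarrow> real^3) \<Rightarrow> real set \<Rightarrow> bool" where
  "arclength_param \<alpha> I \<longleftrightarrow> (\<forall>s\<in>I. norm (hderiv \<alpha> 1 s) = 1)"

text \<open>Curvature of an arclength-parametrized curve: kappa = |T'| = |alpha''|.\<close>
definition curvature :: "(real \<Rightarrow> real^3) \<Rightarrow> real \<Rightarrow> real" where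
  "curvature \<alpha> s = norm (hderiv \<alpha> 2 s)"

definition principal_normal :: "(real \<Rightarrow> real^3) \<Rightarrow> real \<Rightarrow> real^3" where
  "principal_normal \<alpha> s = (1 / curvature \<alpha> s) *\<^sub>R hderiv \<alpha> 2 s"

definition det3 :: "real^3 \<Rightarrow> real^3 \<Rightarrow> real^3 \<Rightarrow> real" where
  "det3 u v w = det (transpose (vector [u, v, w] :: real^3^3))"

definition salkowski :: "(real \<Rightarrow> real^3) \<Rightarrow> real set \<Rightarrow> bool" where
  "salkowski \<alpha> I \<longleftrightarrow>
     (\<exists>k. \<forall>s\<in>I. curvature \<alpha> s = k) \<and>
     (\<exists>d c. norm d = 1 \<and> (\<forall>s\<in>I. principal_normal \<alpha> s \<bullet> d = c))"

end

theory Submission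
  imports Defs
begin

unbundle cross3_syntax

lemma inner_deriv:
  fixes f g :: "real \<Rightarrow> real^3"
  assumes "(f has_vector_derivative f') (at t)" "(g has_vector_derivative g') (at t)"
  shows "((\<lambda>x. f x \<bullet> g x) has_real_derivative (f t \<bullet> g' + f' \<bullet> g t)) (at t)"
  using bounded_bilinear.has_vector_derivative[OF bounded_bilinear_inner assms]
  by (simp add: has_real_derivative_iff_has_vector_derivative)

lemma cross_deriv:
  fixes f g :: "real \<Rightarrow> real^3"
  assumes "(f has_vector_derivative f') (at t)" "(g has_vector_derivative g') (at t)"
  shows "((\<lambda>x. f x \<times> g x) has_vector_derivative (f t \<times> g' + f' \<times> g t)) (at t)"
  using bounded_bilinear.has_vector_derivative[OF bilinear_conv_bounded_bilinear[THEN iffD1, OF bilinear_cross] assms]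
  by simp

lemma const_deriv0:
  fixes g :: "real \<Rightarrow> real"
  assumes "open I" "t \<in> I" "\<forall>s\<in>I. g s = c" "(g has_real_derivative g') (at t)"
  shows "g' = 0"
proof -
  have "((\<lambda>s. c) has_real_derivative 0) (at t)" by simp
  then have "(g has_real_derivative 0) (at t)"
    by (rule has_field_derivative_transform_within_open[OF _ assms(1,2)]) (use assms(3) in auto)
  then show ?thesis using assms(4) DERIV_unique by blast
qed

lemma step_perp:
  fixes f :: "real \<Rightarrow> real^3"
  assumes "open I" "\<forall>s\<in>I. f s \<bullet> d = c"
    "\<forall>t\<in>I. (f has_vector_derivative f' t) (at t)"
  shows "\<forall>t\<in>I. f' t \<bullet> d = 0"
proof
  fix t assume t: "t \<in> I"
  have "((\<lambda>x. f x \<bullet> d) has_real_derivative (f t \<bullet> 0 + f' t \<bullet> d)) (at t)"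
    by (rule inner_deriv) (use assms(3) t in auto)
  from const_deriv0[OF assms(1) t assms(2) this] show "f' t \<bullet> d = 0" by simp
qed

lemma det3_perp:
  fixes u v w d :: "real^3"
  assumes "u \<bullet> d = 0" "v \<bullet> d = 0" "w \<bullet> d = 0" "d \<noteq> 0"
  shows "det3 u v w = 0"
proof (rule ccontr)
  assume "det3 u v w \<noteq> 0"
  then have "det (vector [u, v, w] :: real^3^3) \<noteq> 0" by (simp add: det3_def det_transpose)
  then have "inj ((*v) (vector [u, v, w] :: real^3^3))"
    using invertible_det_nz inj_matrix_vector_mult by blast
  moreover have "(vector [u, v, w] :: real^3^3) *v d = 0"
    using assms by (simp add: vec_eq_iff forall_3 matrix_vector_mult_def vector_3 inner_vec_def sum_3 algebra_simps)
  ultimately show False using assms(4)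
    by (metis matrix_vector_mult_0_right injD)
qed

lemma det3_triple: "det3 u v w = u \<bullet> (v \<times> w)"
  by (simp add: det3_def det_transpose dot_cross_det)

lemma lagrange: fixes a b c e :: "real^3"
  shows "(a \<times> b) \<bullet> (c \<times> e) = (a \<bullet> c) * (b \<bullet> e) - (a \<bullet> e) * (b \<bullet> c)"
  by (simp add: cross3_simps)

lemma cross_par: fixes a b :: "real^3"
  shows "(a \<times> b) \<times> b = (a \<bullet> b) *\<^sub>R b - (b \<bullet> b) *\<^sub>R a"
  by (simp add: cross3_simps forall_3)

lemma inner_const:
  fixes f g :: "real \<Rightarrow> real^3"
  assumes "open I" "\<forall>s\<in>I. f s \<bullet> g s = c"
    "\<forall>t\<in>I. (f has_vector_derivative f' t) (at t)"
    "\<forall>t\<in>I. (g has_vector_derivative g' t) (at t)"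
  shows "\<forall>t\<in>I. f t \<bullet> g' t + f' t \<bullet> g t = 0"
proof
  fix t assume t: "t \<in> I"
  have "((\<lambda>x. f x \<bullet> g x) has_real_derivative (f t \<bullet> g' t + f' t \<bullet> g t)) (at t)"
    by (rule inner_deriv) (use assms(3,4) t in auto)
  from const_deriv0[OF assms(1) t assms(2) this] show "f t \<bullet> g' t + f' t \<bullet> g t = 0" .
qed

theorem theorem4:
  fixes \<alpha> :: "real \<Rightarrow> real^3" and I :: "real set"
  assumes "is_interval I" and "open I" and "I \<noteq> {}"
    and "smooth_curve \<alpha> I"
    and "arclength_param \<alpha> I"
    and "\<forall>s\<in>I. curvature \<alpha> s = 1"
  shows "salkowski \<alpha> I \<longleftrightarrow>
         (\<forall>s\<in>I. det3 (hderiv \<alpha> 3 s) (hderiv \<alpha> 4 s) (hderiv \<alpha> 5 s) = 0)"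
proof -
  have D: "\<And>k t. t\<in>I \<Longrightarrow> (hderiv \<alpha> k has_vector_derivative hderiv \<alpha> (Suc k) t) (at t)"
    using assms(4) unfolding smooth_curve_def by blast
  have D1: "\<forall>t\<in>I. (hderiv \<alpha> 1 has_vector_derivative hderiv \<alpha> 2 t) (at t)"
    using D[of _ 1] by (simp add: numeral_eq_Suc)
  have D2: "\<forall>t\<in>I. (hderiv \<alpha> 2 has_vector_derivative hderiv \<alpha> 3 t) (at t)"
    using D[of _ 2] by (simp add: numeral_eq_Suc)
  have D3: "\<forall>t\<in>I. (hderiv \<alpha> 3 has_vector_derivative hderiv \<alpha> 4 t) (at t)"
    using D[of _ 3] by (simp add: numeral_eq_Suc)
  have D4: "\<forall>t\<in>I. (hderiv \<alpha> 4 has_vector_derivative hderiv \<alpha> 5 t) (at t)"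
    using D[of _ 4] by (simp add: numeral_eq_Suc)
  have PN: "\<forall>s\<in>I. principal_normal \<alpha> s = hderiv \<alpha> 2 s"
    using assms(6) by (simp add: principal_normal_def)
  have n2: "\<forall>s\<in>I. norm (hderiv \<alpha> 2 s) = 1"
    using assms(6) by (simp add: curvature_def)
  have n1: "\<forall>s\<in>I. norm (hderiv \<alpha> 1 s) = 1"
    using assms(5) by (simp add: arclength_param_def)
  show ?thesis
  proof
    assume "salkowski \<alpha> I"
    then obtain d c where nd: "norm d = 1" and hc: "\<forall>s\<in>I. principal_normal \<alpha> s \<bullet> d = c"
      unfolding salkowski_def by blast
    have h2: "\<forall>s\<in>I. hderiv \<alpha> 2 s \<bullet> d = c" using hc PN by simp
    note h3 = step_perp[OF assms(2) h2 D2]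
    have h4: "\<forall>t\<in>I. hderiv \<alpha> 4 t \<bullet> d = 0" using step_perp[OF assms(2) h3 D3] .
    have h5: "\<forall>t\<in>I. hderiv \<alpha> 5 t \<bullet> d = 0" using step_perp[OF assms(2) h4 D4] .
    have "d \<noteq> 0" using nd by auto
    then show "\<forall>s\<in>I. det3 (hderiv \<alpha> 3 s) (hderiv \<alpha> 4 s) (hderiv \<alpha> 5 s) = 0"
      using h3 h4 h5 det3_perp by blast
  next
    assume hdet: "\<forall>s\<in>I. det3 (hderiv \<alpha> 3 s) (hderiv \<alpha> 4 s) (hderiv \<alpha> 5 s) = 0"
    have e11: "\<forall>s\<in>I. hderiv \<alpha> 1 s \<bullet> hderiv \<alpha> 1 s = 1"
      using n1 by (simp flip: power2_norm_eq_inner)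
    have e22: "\<forall>s\<in>I. hderiv \<alpha> 2 s \<bullet> hderiv \<alpha> 2 s = 1"
      using n2 by (simp flip: power2_norm_eq_inner)
    have e12: "\<forall>s\<in>I. hderiv \<alpha> 1 s \<bullet> hderiv \<alpha> 2 s = 0"
      using inner_const[OF assms(2) e11 D1 D1] by (simp add: inner_commute)
    have e23: "\<forall>s\<in>I. hderiv \<alpha> 2 s \<bullet> hderiv \<alpha> 3 s = 0"
      using inner_const[OF assms(2) e22 D2 D2] by (simp add: inner_commute)
    have e13: "\<forall>s\<in>I. hderiv \<alpha> 1 s \<bullet> hderiv \<alpha> 3 s = -1"
      using inner_const[OF assms(2) e12 D1 D2] e22 by (simp add: inner_commute add_eq_0_iff)
    have e24: "\<forall>s\<in>I. hderiv \<alpha> 2 s \<bullet> hderiv \<alpha> 4 s = - (hderiv \<alpha> 3 s \<bullet> hderiv \<alpha> 3 s)"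
      using inner_const[OF assms(2) e23 D2 D3] by (simp add: inner_commute add_eq_0_iff)
    define w where "w t = hderiv \<alpha> 3 t \<times> hderiv \<alpha> 4 t" for t
    define w' where "w' t = hderiv \<alpha> 3 t \<times> hderiv \<alpha> 5 t" for t
    have Dw: "\<forall>t\<in>I. (w has_vector_derivative w' t) (at t)"
    proof
      fix t assume t: "t \<in> I"
      have "((\<lambda>x. hderiv \<alpha> 3 x \<times> hderiv \<alpha> 4 x) has_vector_derivative
         (hderiv \<alpha> 3 t \<times> hderiv \<alpha> 5 t + hderiv \<alpha> 4 t \<times> hderiv \<alpha> 4 t)) (at t)"
        by (rule cross_deriv) (use D3 D4 t in auto)
      then show "(w has_vector_derivative w' t) (at t)"
        by (simp add: w_def[abs_def] w'_def)
    qed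
    have wnz: "\<forall>t\<in>I. w t \<bullet> w t > 0"
    proof
      fix t assume t: "t \<in> I"
      have "hderiv \<alpha> 3 t \<noteq> 0" using e13 t by force
      then have pos: "hderiv \<alpha> 3 t \<bullet> hderiv \<alpha> 3 t > 0" by simp
      have "w t \<bullet> (hderiv \<alpha> 2 t \<times> hderiv \<alpha> 3 t) = (hderiv \<alpha> 3 t \<bullet> hderiv \<alpha> 3 t)^2"
        unfolding w_def lagrange using e23 e24 t
        by (simp add: inner_commute power2_eq_square)
      then have "w t \<noteq> 0" using pos by (metis inner_zero_left power_not_zero less_irrefl)
      then show "w t \<bullet> w t > 0" by simp
    qed
    have par: "\<forall>t\<in>I. w' t = ((w' t \<bullet> w t) / (w t \<bullet> w t)) *\<^sub>R w t"
    proof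
      fix t assume t: "t \<in> I"
      have "det (vector [hderiv \<alpha> 3 t, hderiv \<alpha> 4 t, hderiv \<alpha> 5 t]) = 0"
        using hdet t by (simp add: det3_triple dot_cross_det)
      then have z1: "hderiv \<alpha> 3 t \<bullet> (hderiv \<alpha> 5 t \<times> hderiv \<alpha> 4 t) = 0"
        by (metis dot_cross_det cross_skew inner_minus_right neg_equal_0_iff_equal)
      have "w' t \<times> w t = 0"
        unfolding w_def w'_def cross_cross_det dot_cross_det[symmetric] using z1
        by (simp add: dot_cross_self)
      then have "0 = (w' t \<bullet> w t) *\<^sub>R w t - (w t \<bullet> w t) *\<^sub>R w' t"
        using cross_par[of "w' t" "w t"] by simp
      then have "(w t \<bullet> w t) *\<^sub>R w' t = (w' t \<bullet> w t) *\<^sub>R w t" by simp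
      then show "w' t = ((w' t \<bullet> w t) / (w t \<bullet> w t)) *\<^sub>R w t"
        using wnz t by (metis (no_types, lifting) divideR_right less_irrefl scaleR_scaleR divide_inverse mult.commute)
    qed
    define d where "d t = inverse (sqrt (w t \<bullet> w t)) *\<^sub>R w t" for t
    have Dd: "\<forall>t\<in>I. (d has_vector_derivative 0) (at t)"
    proof
      fix t assume t: "t \<in> I"
      let ?q = "w t \<bullet> w t" and ?p = "w' t \<bullet> w t"
      have q: "?q > 0" using wnz t by blast
      define \<nu> where "\<nu> = sqrt ?q"
      have nu: "\<nu> > 0" "\<nu> * \<nu> = ?q" using q by (auto simp: \<nu>_def)
      have dq: "((\<lambda>x. w x \<bullet> w x) has_real_derivative (w t \<bullet> w' t + w' t \<bullet> w t)) (at t)"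
        by (rule inner_deriv) (use Dw t in auto)
      have dn: "((\<lambda>x. sqrt (w x \<bullet> w x)) has_real_derivative (inverse (sqrt ?q) / 2 * (w t \<bullet> w' t + w' t \<bullet> w t))) (at t)"
        by (rule DERIV_chain2[OF DERIV_real_sqrt[OF q] dq])
      have di: "((\<lambda>x. inverse (sqrt (w x \<bullet> w x))) has_real_derivative
          (- (inverse (sqrt ?q) ^ 2) * (inverse (sqrt ?q) / 2 * (w t \<bullet> w' t + w' t \<bullet> w t)))) (at t)"
        using DERIV_inverse'[OF dn] q by (simp add: power2_eq_square mult_ac)
      have "(d has_vector_derivative (inverse (sqrt ?q) *\<^sub>R w' t +
          (- (inverse (sqrt ?q) ^ 2) * (inverse (sqrt ?q) / 2 * (w t \<bullet> w' t + w' t \<bullet> w t))) *\<^sub>R w t)) (at t)"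
        unfolding d_def[abs_def] by (rule has_vector_derivative_scaleR[OF di]) (use Dw t in auto)
      moreover have "inverse (sqrt ?q) *\<^sub>R w' t +
          (- (inverse (sqrt ?q) ^ 2) * (inverse (sqrt ?q) / 2 * (w t \<bullet> w' t + w' t \<bullet> w t))) *\<^sub>R w t = 0"
      proof -
        have "inverse (sqrt ?q) *\<^sub>R w' t = (inverse \<nu> * (?p / ?q)) *\<^sub>R w t"
          using par t by (metis \<nu>_def scaleR_scaleR)
        moreover have "inverse \<nu> * (?p / ?q) + (- (inverse \<nu> ^ 2) * (inverse \<nu> / 2 * (w t \<bullet> w' t + w' t \<bullet> w t))) = 0"
          using nu by (simp add: inner_commute field_simps power2_eq_square flip: nu(2))
        ultimately show ?thesis unfolding \<nu>_def[symmetric]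
          by (metis scaleR_left_distrib scaleR_zero_left)
      qed
      ultimately show "(d has_vector_derivative 0) (at t)" by simp
    qed
    have "convex I" using assms(1) by (simp add: is_interval_convex)
    then obtain d0 where d0: "\<And>t. t \<in> I \<Longrightarrow> d t = d0"
      using has_vector_derivative_zero_constant[of I d] Dd has_vector_derivative_at_within by blast
    obtain t0 where t0: "t0 \<in> I" using assms(3) by blast
    have "norm d0 = 1"
    proof -
      have q: "w t0 \<bullet> w t0 > 0" using wnz t0 by blast
      have "norm (d t0) = inverse (sqrt (w t0 \<bullet> w t0)) * norm (w t0)"
        unfolding d_def using q by simp
      also have "\<dots> = 1" using q by (simp add: norm_eq_sqrt_inner)
      finally show ?thesis using d0 t0 by simp
    qed
    moreover have "\<exists>c. \<forall>s\<in>I. hderiv \<alpha> 2 s \<bullet> d0 = c"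
    proof (rule has_field_derivative_zero_constant[OF \<open>convex I\<close>])
      fix t assume t: "t \<in> I"
      have "((\<lambda>x. hderiv \<alpha> 2 x \<bullet> d0) has_real_derivative (hderiv \<alpha> 2 t \<bullet> 0 + hderiv \<alpha> 3 t \<bullet> d0)) (at t)"
        by (rule inner_deriv) (use D2 t in auto)
      moreover have "hderiv \<alpha> 3 t \<bullet> d0 = 0"
      proof -
        have "hderiv \<alpha> 3 t \<bullet> d t = 0" by (simp add: d_def w_def dot_cross_self)
        then show ?thesis using d0[OF t] by simp
      qed
      ultimately show "((\<lambda>x. hderiv \<alpha> 2 x \<bullet> d0) has_real_derivative 0) (at t within I)"
        using has_field_derivative_at_within by fastforce
    qed
    ultimately show "salkowski \<alpha> I"
      unfolding salkowski_def using PN assms(6) by auto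
  qed
qed

end
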